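(* Let $\mathcal{P}_{XY}$ be a probability measure on a product measurable space $(\mathcal{X}\times\mathcal{Y},\mathcal{F})$ with marginals $\mathcal{P}_X,\mathcal{P}_Y$, and assume $\mathcal{P}_{XY}\ll\mathcal{P}_X\mathcal{P}_Y$. Then for every $E\in\mathcal{F}$, $$\mathcal{P}_{XY}(E)\le\left(\operatorname*{ess\,sup}_{\mathcal{P}_Y}\mathcal{P}_X(E_Y)\right)\exp\left(\mathcal{L}(X\to Y)\right).$$
   Context: For $E\in\mathcal{F}$ and $y\in\mathcal{Y}$, $E_y:=\{x:(x,y)\in E\}$; $\operatorname*{ess\,sup}_{\mathcal{P}_Y}\mathcal{P}_X(E_Y)$ is the $\mathcal{P}_Y$-essential supremum of $y\mapsto\mathcal{P}_X(E_y)$. The maximal leakage from $X$ to $Y$ (Sibson mutual information of order $\infty$) is, with $f=\frac{d\mathcal{P}_{XY}}{d\mathcal{P}_X\mathcal{P}_Y}$, $\mathcal{L}(X\to Y)=I_\infty(X;Y)=\log\mathbb{E}_{\mathcal{P}_Y}\left[\operatorname*{ess\,sup}_{\mathcal{P}_X}f(\cdot,Y)\right]$, where for fixed $y$ the essential supremum of $x\mapsto f(x,y)$ is taken with respect to $\mathcal{P}_X$ (for discrete alphabets this is $\log\mathbb{E}_{\mathcal{P}_Y}\left[\sup_{x:\mathcal{P}_X(x)>0}\frac{\mathcal{P}_{XY}(x,Y)}{\mathcal{P}_X(x)\mathcal{P}_Y(Y)}\right]$). Logarithms are natural. *)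

theory Defs
  imports "HOL-Probability.Probability"
begin

definition exp_ereal :: "ereal \<Rightarrow> ennreal" where
  "exp_ereal t = (case t of ereal r \<Rightarrow> ennreal (exp r) | PInfty \<Rightarrow> \<infinity> | MInfty \<Rightarrow> 0)"

definition ln_ennreal :: "ennreal \<Rightarrow> ereal" where
  "ln_ennreal t = (if t = \<infinity> then \<infinity> else if t = 0 then -\<infinity> else ereal (ln (enn2real t)))"

definition maximal_leakage :: "'a measure \<Rightarrow> 'b measure \<Rightarrow> ('a \<times> 'b) measure \<Rightarrow> ereal" where
  "maximal_leakage PX PY PXY =
     ln_ennreal (\<integral>\<^sup>+ y. esssup PX (\<lambda>x. RN_deriv (PX \<Otimes>\<^sub>M PY) PXY (x, y)) \<partial>PY)"

end

theory Submission
  imports Defs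
begin

lemma exp_ln_ennreal: "exp_ereal (ln_ennreal t) = t"
proof -
  { assume a: "t \<noteq> \<infinity>" "t \<noteq> 0"
    then have p: "0 < enn2real t" by (simp add: enn2real_positive_iff top.not_eq_extremum zero_less_iff_neq_zero)
    have "exp_ereal (ln_ennreal t) = ennreal (exp (ln (enn2real t)))"
      using a by (simp add: exp_ereal_def ln_ennreal_def)
    also have "\<dots> = t" using p a by (simp add: ennreal_enn2real_if)
    finally have ?thesis . }
  then show ?thesis by (auto simp: exp_ereal_def ln_ennreal_def)
qed

lemma esssup_gt_iff:
  fixes f :: "'a \<Rightarrow> ennreal"
  assumes "f \<in> borel_measurable M"
  shows "a < esssup M f \<longleftrightarrow> emeasure M {x\<in>space M. a < f x} \<noteq> 0"
proof -
  have "esssup M f \<le> a \<longleftrightarrow> (AE x in M. f x \<le> a)"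
    using esssup_I[OF assms] esssup_AE[of f M]
    by (auto elim: AE_mp intro: order_trans)
  also have "\<dots> \<longleftrightarrow> emeasure M {x\<in>space M. a < f x} = 0"
    by (subst AE_iff_measurable[OF _ refl]) (use assms in \<open>auto simp: not_le\<close>)
  finally show ?thesis by (simp add: not_le[symmetric])
qed

theorem corollary3:
  fixes PX :: "'a measure" and PY :: "'b measure" and PXY :: "('a \<times> 'b) measure"
  assumes "prob_space PX" and "prob_space PY" and "prob_space PXY"
    and "sets PXY = sets (PX \<Otimes>\<^sub>M PY)"
    and "distr PXY PX fst = PX" and "distr PXY PY snd = PY"
    and "absolutely_continuous (PX \<Otimes>\<^sub>M PY) PXY"
    and "E \<in> sets (PX \<Otimes>\<^sub>M PY)"
  shows "emeasure PXY E
           \<le> esssup PY (\<lambda>y. emeasure PX ((\<lambda>x. (x, y)) -` E \<inter> space PX))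
             * exp_ereal (maximal_leakage PX PY PXY)"
proof -
  interpret P: pair_prob_space PX PY
    by (simp add: pair_prob_space_def pair_sigma_finite_def assms prob_space_imp_sigma_finite)
  define f where "f = RN_deriv (PX \<Otimes>\<^sub>M PY) PXY"
  have fm[measurable]: "f \<in> borel_measurable (PX \<Otimes>\<^sub>M PY)" unfolding f_def by simp
  note Em[measurable] = assms(8)
  define h where "h y = emeasure PX ((\<lambda>x. (x, y)) -` E \<inter> space PX)" for y
  define c where "c = esssup PY h"
  define g where "g y = esssup PX (\<lambda>x. f (x, y))" for y
  have dens: "density (PX \<Otimes>\<^sub>M PY) f = PXY"
    unfolding f_def using assms(4,7) by (intro P.P.density_RN_deriv) auto
  have gm: "g \<in> borel_measurable PY"
  proof (rule borel_measurableI_greater)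
    fix a
    have "{y\<in>space PY. a < g y} =
      {y\<in>space PY. (\<integral>\<^sup>+x. indicator {z\<in>space (PX \<Otimes>\<^sub>M PY). a < f z} (x, y) \<partial>PX) \<noteq> 0}"
    proof (intro Collect_cong conj_cong refl)
      fix y assume y: "y \<in> space PY"
      have "(\<lambda>x. f (x, y)) \<in> borel_measurable PX" using y by measurable
      then have "a < g y \<longleftrightarrow> emeasure PX {x\<in>space PX. a < f (x, y)} \<noteq> 0"
        unfolding g_def by (rule esssup_gt_iff)
      also have "emeasure PX {x\<in>space PX. a < f (x, y)} =
          (\<integral>\<^sup>+x. indicator {z\<in>space (PX \<Otimes>\<^sub>M PY). a < f z} (x, y) \<partial>PX)"
        using y \<open>(\<lambda>x. f (x, y)) \<in> borel_measurable PX\<close>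
      proof -
        have "emeasure PX {x\<in>space PX. a < f (x, y)} = (\<integral>\<^sup>+x. indicator {x\<in>space PX. a < f (x, y)} x \<partial>PX)"
        proof -
          note mf[measurable] = \<open>(\<lambda>x. f (x, y)) \<in> borel_measurable PX\<close>
          have "{x\<in>space PX. a < f (x, y)} \<in> sets PX" by measurable
          then show ?thesis by (rule nn_integral_indicator[symmetric])
        qed
        also have "\<dots> = (\<integral>\<^sup>+x. indicator {z\<in>space (PX \<Otimes>\<^sub>M PY). a < f z} (x, y) \<partial>PX)"
          using y by (intro nn_integral_cong) (auto simp: space_pair_measure indicator_def)
        finally show ?thesis .
      qed
      finally show "a < g y \<longleftrightarrow> (\<integral>\<^sup>+x. indicator {z\<in>space (PX \<Otimes>\<^sub>M PY). a < f z} (x, y) \<partial>PX) \<noteq> 0" .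
    qed
    also have "\<dots> \<in> sets PY"
    proof -
      have "(\<lambda>y. \<integral>\<^sup>+x. indicator {z\<in>space (PX \<Otimes>\<^sub>M PY). a < f z} (x, y) \<partial>PX) \<in> borel_measurable PY"
        by (rule P.M1.borel_measurable_nn_integral) (simp add: measurable_pair_swap_iff[symmetric] case_prod_beta)
      then show ?thesis by measurable
    qed
    finally show "{y\<in>space PY. a < g y} \<in> sets PY" .
  qed
  have "emeasure PXY E = (\<integral>\<^sup>+z. f z * indicator E z \<partial>(PX \<Otimes>\<^sub>M PY))"
    by (subst dens[symmetric]) (simp add: emeasure_density nn_integral_set_ennreal mult.commute)
  also have "\<dots> = (\<integral>\<^sup>+y. \<integral>\<^sup>+x. f (x, y) * indicator E (x, y) \<partial>PX \<partial>PY)"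
    by (rule P.nn_integral_snd[symmetric]) simp
  also have "\<dots> \<le> (\<integral>\<^sup>+y. g y * h y \<partial>PY)"
  proof (rule nn_integral_mono)
    fix y assume y: "y \<in> space PY"
    have "(\<integral>\<^sup>+x. f (x, y) * indicator E (x, y) \<partial>PX) \<le> (\<integral>\<^sup>+x. g y * indicator ((\<lambda>x. (x, y)) -` E \<inter> space PX) x \<partial>PX)"
    proof (rule nn_integral_mono_AE)
      show "AE x in PX. f (x, y) * indicator E (x, y) \<le> g y * indicator ((\<lambda>x. (x, y)) -` E \<inter> space PX) x"
        using esssup_AE[of "\<lambda>x. f (x, y)" PX] AE_space[of PX] unfolding g_def
        by eventually_elim (auto simp: indicator_def)
    qed
    also have "\<dots> = g y * h y" unfolding h_def
      using y by (subst nn_integral_cmult_indicator) (auto intro: measurable_sets_Collect)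
    finally show "(\<integral>\<^sup>+x. f (x, y) * indicator E (x, y) \<partial>PX) \<le> g y * h y" .
  qed
  also have "\<dots> \<le> (\<integral>\<^sup>+y. g y * c \<partial>PY)"
    using esssup_AE[of h PY] unfolding c_def
    by (intro nn_integral_mono_AE) (erule AE_mp, auto intro!: AE_I2 mult_left_mono)
  also have "\<dots> = (\<integral>\<^sup>+y. g y \<partial>PY) * c"
    using gm by (rule nn_integral_multc)
  also have "\<dots> = c * exp_ereal (maximal_leakage PX PY PXY)"
    by (simp add: maximal_leakage_def exp_ln_ennreal g_def f_def mult.commute)
  finally show ?thesis unfolding c_def h_def .
qed

end
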